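(* Let $\alpha\in[-1,1]$ and let $F_\alpha(z)=\dfrac{z(1-\alpha z)}{1-z^2}$ for $z\in E$. Then $\Re\big[(1-z^2)F_\alpha'(z)\big]>0$ for all $z\in E$; consequently $F_\alpha$ is univalent in $E$ and maps $E$ onto a domain convex in the direction of the imaginary axis. Moreover, if $f=h+\overline{g}$ is a locally univalent, sense-preserving harmonic mapping in $E$ with $h(0)=g(0)=0$, $h'(0)=1$, $g'(0)=0$ and $h+g=F_\alpha$, then $f\in S_H$ and $f$ maps $E$ onto a domain convex in the direction of the imaginary axis.
   Context: $E=\{z\in\mathbb{C}:|z|<1\}$. A harmonic mapping $f=h+\overline{g}$ on $E$ (with $h,g$ analytic) is locally univalent and sense-preserving iff $h'\neq0$ in $E$ and its dilatation $\omega=g'/h'$ satisfies $|\omega|<1$ in $E$. $S_H$ denotes the class of harmonic, univalent, sense-preserving mappings $f=h+\overline{g}$ of $E$ normalized by $f(0)=0$, $f_z(0)=1$. A domain $\Omega$ is convex in the direction of the imaginary axis if every line parallel to the imaginary axis has connected or empty intersection with $\Omega$. *)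

theory Defs
  imports "HOL-Analysis.Analysis"
begin

definition unit_disc :: "complex set" where
  "unit_disc = ball 0 1"

definition F_alpha :: "real \<Rightarrow> complex \<Rightarrow> complex" where
  "F_alpha \<alpha> z = z * (1 - complex_of_real \<alpha> * z) / (1 - z^2)"

definition convex_imag_dir :: "complex set \<Rightarrow> bool" where
  "convex_imag_dir \<Omega> \<longleftrightarrow> (\<forall>x::real. connected (\<Omega> \<inter> {w. Re w = x}))"

definition loc_univ_sense_pres :: "(complex \<Rightarrow> complex) \<Rightarrow> (complex \<Rightarrow> complex) \<Rightarrow> bool" where
  "loc_univ_sense_pres h g \<longleftrightarrow>
     (\<forall>z\<in>unit_disc. deriv h z \<noteq> 0 \<and> norm (deriv g z / deriv h z) < 1)"

definition S_H :: "(complex \<Rightarrow> complex) set" where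
  "S_H = {f. \<exists>h g. h holomorphic_on unit_disc \<and> g holomorphic_on unit_disc \<and>
             (\<forall>z\<in>unit_disc. f z = h z + cnj (g z)) \<and>
             inj_on f unit_disc \<and> loc_univ_sense_pres h g \<and>
             f 0 = 0 \<and> deriv h 0 = 1}"

end

theory Submission
  imports Defs "HOL-Complex_Analysis.Conformal_Mappings"
begin


lemma disc_iff: "z \<in> unit_disc \<longleftrightarrow> norm z < 1"
  by (simp add: unit_disc_def)

lemma sq_ne1: "norm (z::complex) < 1 \<Longrightarrow> 1 - z^2 \<noteq> 0"
proof -
  assume a: "norm z < 1"
  have "norm (z^2) < 1" using a by (simp add: norm_power abs_square_less_1)
  then show ?thesis by auto
qed

lemma pm_ne: "norm (z::complex) < 1 \<Longrightarrow> 1 - z \<noteq> 0 \<and> 1 + z \<noteq> 0"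
proof -
  assume "norm z < 1"
  show ?thesis
  proof
    show "1 - z \<noteq> 0" using \<open>norm z < 1\<close> by auto
    show "1 + z \<noteq> 0"
    proof
      assume "1 + z = 0" then have "z = -1" by (simp add: add_eq_0_iff)
      with \<open>norm z < 1\<close> show False by simp
    qed
  qed
qed

lemma F_deriv:
  assumes "norm z < 1"
  shows "(F_alpha \<alpha> has_field_derivative (1 - 2*\<alpha>*z + z^2)/(1-z^2)^2) (at z)"
proof -
  have nz2: "z^2 \<noteq> 1" using sq_ne1[OF assms] by auto
  show ?thesis
  unfolding F_alpha_def[abs_def]
  apply (rule derivative_eq_intros refl | simp add: nz2)+
  apply (simp add: power2_eq_square algebra_simps)
  done
qed

lemma Re_quot_pos: "norm (z::complex) < 1 \<Longrightarrow> Re ((1-z)/(1+z)) > 0"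
proof -
  assume a: "norm z < 1"
  have n: "Re z ^ 2 + Im z ^ 2 < 1"
  proof -
    have "norm z ^ 2 < 1" using a by (simp add: abs_square_less_1)
    then show ?thesis by (simp add: cmod_power2)
  qed
  have d: "(1 + Re z)^2 + (Im z)^2 > 0"
  proof -
    have "norm (1 + z) > 0" using pm_ne[OF a] by simp
    then have "norm (1 + z) ^ 2 > 0" by simp
    then show ?thesis by (simp add: cmod_power2)
  qed
  have "Re ((1-z)/(1+z)) = ((1 - Re z) * (1 + Re z) + (- Im z) * Im z) / ((1 + Re z)^2 + (Im z)^2)"
    by (simp add: Re_divide power2_eq_square)
  also have "\<dots> > 0" using n d by (intro divide_pos_pos) (auto simp: power2_eq_square algebra_simps)
  finally show ?thesis .
qed

lemma Re_quot_pos2: "norm (z::complex) < 1 \<Longrightarrow> Re ((1+z)/(1-z)) > 0"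
  using Re_quot_pos[of "-z"] by simp

lemma partA:
  assumes "-1 \<le> \<alpha>" "\<alpha> \<le> 1" "norm z < 1"
  shows "Re ((1 - z^2) * deriv (F_alpha \<alpha>) z) > 0"
proof -
  have nz: "1 - z^2 \<noteq> 0" "1 - z \<noteq> 0" "1 + z \<noteq> 0" using sq_ne1[OF assms(3)] pm_ne[OF assms(3)] by auto
  have d: "deriv (F_alpha \<alpha>) z = (1 - 2 * of_real \<alpha> * z + z^2)/(1-z^2)^2"
    using F_deriv[OF assms(3)] by (rule DERIV_imp_deriv)
  have fac: "1 - z^2 = (1-z)*(1+z)" by (simp add: algebra_simps power2_eq_square)
  have "(1 - z^2) * deriv (F_alpha \<alpha>) z = ((1+\<alpha>)/2) *\<^sub>R ((1-z)/(1+z)) + ((1-\<alpha>)/2) *\<^sub>R ((1+z)/(1-z))"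
  proof -
    define N where "N = 1 - 2 * of_real \<alpha> * z + z^2"
    define D where "D = (1-z)*(1+z)"
    have Dn: "D \<noteq> 0" using nz unfolding D_def by simp
    have L: "D * (N / D^2) = N / D" using Dn by (simp add: power2_eq_square)
    have r1: "(1-z)/(1+z) = (1-z)^2 / D" using nz unfolding D_def by (simp add: power2_eq_square)
    have r2: "(1+z)/(1-z) = (1+z)^2 / D" using nz unfolding D_def by (simp add: power2_eq_square)
    have num: "of_real ((1+\<alpha>)/2) * (1-z)^2 + of_real ((1-\<alpha>)/2) * (1+z)^2 = N"
      unfolding N_def by (simp add: field_simps power2_eq_square)
    have "((1+\<alpha>)/2) *\<^sub>R ((1-z)/(1+z)) + ((1-\<alpha>)/2) *\<^sub>R ((1+z)/(1-z))
        = (of_real ((1+\<alpha>)/2) * (1-z)^2 + of_real ((1-\<alpha>)/2) * (1+z)^2) / D"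
      unfolding scaleR_conv_of_real r1 r2 by (simp add: add_divide_distrib)
    also have "\<dots> = N / D" using num by simp
    also have "\<dots> = (1 - z^2) * deriv (F_alpha \<alpha>) z"
    proof -
      have "(1 - z^2) * deriv (F_alpha \<alpha>) z = D * (N / D^2)" unfolding d fac N_def D_def by simp
      then show ?thesis using L by simp
    qed
    finally show ?thesis by simp
  qed
  then have "Re ((1 - z^2) * deriv (F_alpha \<alpha>) z) = ((1+\<alpha>)/2) * Re ((1-z)/(1+z)) + ((1-\<alpha>)/2) * Re ((1+z)/(1-z))"
    by simp
  moreover have p: "Re ((1-z)/(1+z)) > 0" and q: "Re ((1+z)/(1-z)) > 0"
    using Re_quot_pos Re_quot_pos2 assms(3) by auto
  moreover have "((1+\<alpha>)/2) * Re ((1-z)/(1+z)) \<ge> ((1+\<alpha>)/2) * min (Re ((1-z)/(1+z))) (Re ((1+z)/(1-z)))"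
    by (rule mult_left_mono) (use assms(1) in auto)
  moreover have "((1-\<alpha>)/2) * Re ((1+z)/(1-z)) \<ge> ((1-\<alpha>)/2) * min (Re ((1-z)/(1+z))) (Re ((1+z)/(1-z)))"
    by (rule mult_left_mono) (use assms(2) in auto)
  moreover have "min (Re ((1-z)/(1+z))) (Re ((1+z)/(1-z))) > 0" using p q by simp
  ultimately show ?thesis by (simp add: field_simps)
qed



lemma partB:
  assumes "-1 \<le> \<alpha>" "\<alpha> \<le> 1"
  shows "inj_on (F_alpha \<alpha>) unit_disc"
proof (rule inj_onI)
  fix z w assume z: "z \<in> unit_disc" and w: "w \<in> unit_disc" and eq: "F_alpha \<alpha> z = F_alpha \<alpha> w"
  have nz: "norm z < 1" and nw: "norm w < 1" using z w by (auto simp: disc_iff)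
  have dz: "1 - z^2 \<noteq> 0" and dw: "1 - w^2 \<noteq> 0" using sq_ne1 nz nw by auto
  have "z * (1 - of_real \<alpha> * z) * (1 - w^2) = w * (1 - of_real \<alpha> * w) * (1 - z^2)"
    using eq dz dw unfolding F_alpha_def by (simp add: field_simps)
  then have "(z - w) * (1 - of_real \<alpha> * (z + w) + z * w) = 0"
    by (simp add: algebra_simps power2_eq_square)
  moreover have "1 - of_real \<alpha> * (z + w) + z * w \<noteq> 0"
  proof
    assume h: "1 - of_real \<alpha> * (z + w) + z * w = 0"
    then have h2: "w * (z - of_real \<alpha>) = of_real \<alpha> * z - 1" by (simp add: algebra_simps)
    have n: "Re z ^ 2 + Im z ^ 2 < 1"
    proof -
      have "norm z ^ 2 < 1" using nz by (simp add: abs_square_less_1)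
      then show ?thesis by (simp add: cmod_power2)
    qed
    have e1: "norm (of_real \<alpha> * z - 1)^2 = (\<alpha>*Re z - 1)^2 + (\<alpha>*Im z)^2" by (simp add: cmod_power2)
    have e2: "norm (z - of_real \<alpha>)^2 = (Re z - \<alpha>)^2 + (Im z)^2" by (simp add: cmod_power2)
    have e3: "(\<alpha>*Re z - 1)^2 + (\<alpha>*Im z)^2 - ((Re z - \<alpha>)^2 + (Im z)^2) = (1-\<alpha>^2)*(1 - (Re z^2 + Im z^2))"
      by algebra
    have a2: "1 - \<alpha>^2 \<ge> 0" using assms by (simp add: abs_square_le_1)
    have key: "norm (z - of_real \<alpha>) ^ 2 \<le> norm (of_real \<alpha> * z - 1) ^ 2"
      using e1 e2 e3 a2 n mult_nonneg_nonneg[OF a2, of "1 - (Re z^2 + Im z^2)"] by linarith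
    have "z \<noteq> of_real \<alpha>"
    proof
      assume za: "z = of_real \<alpha>"
      with h have "of_real (1 - \<alpha>^2) = (0::complex)" by (simp add: algebra_simps power2_eq_square)
      then have "1 - \<alpha>^2 = 0" by (simp only: of_real_eq_0_iff)
      then have "\<alpha>^2 = 1" by simp
      then have "\<alpha> = 1 \<or> \<alpha> = -1" using power2_eq_1_iff by blast
      then have "\<bar>\<alpha>\<bar> = 1" by auto
      with za nz show False by simp
    qed
    then have pos: "norm (z - of_real \<alpha>) > 0" by simp
    have "norm w * norm (z - of_real \<alpha>) = norm (of_real \<alpha> * z - 1)" using h2 by (metis norm_mult)
    then have "norm w ^ 2 * norm (z - of_real \<alpha>) ^ 2 = norm (of_real \<alpha> * z - 1) ^ 2"
      by (simp add: power_mult_distrib[symmetric])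
    with key have "norm w ^ 2 * norm (z - of_real \<alpha>) ^ 2 \<ge> 1 * norm (z - of_real \<alpha>) ^ 2" by simp
    then have "norm w ^ 2 \<ge> 1" using pos by (simp add: mult_le_cancel_right)
    moreover have "norm w ^ 2 < 1" using nw by (simp add: abs_square_less_1)
    ultimately show False by simp
  qed
  ultimately show "z = w" by simp
qed




definition Pc :: "real \<Rightarrow> real \<Rightarrow> complex \<Rightarrow> bool" where
  "Pc a b \<zeta> \<longleftrightarrow> (a = 0 \<longrightarrow> Re \<zeta> > 0) \<and> (b = 0 \<longrightarrow> Re \<zeta> < 0) \<and> (Re \<zeta> = 0 \<longrightarrow> Im \<zeta> ^ 2 < 4*a*b)"

lemma T_P:
  assumes ab: "a \<ge> 0" "b \<ge> 0" "a + b = 1" and w: "Re w > 0"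
  shows "Pc a b (of_real b * w - of_real a / w)"
proof -
  define u where "u = Re w"
  define v where "v = Im w"
  define r where "r = u^2 + v^2"
  have u: "u > 0" using w u_def by simp
  have r: "r > 0" unfolding r_def using u by (simp add: add_pos_nonneg)
  have vr: "v^2 < r" unfolding r_def using u by simp
  have re: "Re (of_real b * w - of_real a / w) = b * u - a * u / r"
    unfolding u_def v_def r_def by (simp add: Re_divide power2_eq_square)
  have im: "Im (of_real b * w - of_real a / w) = b * v + a * v / r"
    unfolding u_def v_def r_def by (simp add: Im_divide power2_eq_square)
  show ?thesis unfolding Pc_def re im
  proof (intro conjI impI)
    assume "a = 0" then have "b = 1" using ab by simp
    then show "b * u - a * u / r > 0" using \<open>a = 0\<close> u by simp
  next
    assume "b = 0" then have "a = 1" using ab by simp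
    then show "b * u - a * u / r < 0" using \<open>b = 0\<close> u r by simp
  next
    assume h: "b * u - a * u / r = 0"
    then have "u * (b - a/r) = 0" by (simp add: algebra_simps)
    then have "b = a/r" using u by simp
    then have br: "b * r = a" using r by simp
    have bpos: "b > 0"
    proof (rule ccontr)
      assume "\<not> b > 0" then have "b = 0" using ab by simp
      then show False using br ab by simp
    qed
    have "b * v + a * v / r = 2 * b * v" using \<open>b = a/r\<close> by simp
    then have "(b * v + a * v / r)^2 = 4 * b^2 * v^2" by (simp add: power2_eq_square)
    also have "\<dots> < 4*b^2*r" using vr bpos by simp
    also have "\<dots> = 4*a*b" using br by (simp add: power2_eq_square)
    finally show "(b * v + a * v / r)^2 < 4*a*b" .
  qed
qed

lemma P_T:
  assumes ab: "a \<ge> 0" "b \<ge> 0" "a + b = 1" and P: "Pc a b \<zeta>"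
  shows "\<exists>w. Re w > 0 \<and> \<zeta> = of_real b * w - of_real a / w"
proof (cases "b = 0")
  case True
  then have a1: "a = 1" using ab by simp
  have re: "Re \<zeta> < 0" using P True unfolding Pc_def by simp
  then have z0: "\<zeta> \<noteq> 0" by auto
  have "Re (- 1 / \<zeta>) = - Re \<zeta> / (Re \<zeta>^2 + Im \<zeta>^2)" by (simp add: Re_divide power2_eq_square)
  also have "\<dots> > 0" using re by (intro divide_pos_pos) (auto simp: add_pos_nonneg)
  finally have "Re (- 1 / \<zeta>) > 0" .
  moreover have "\<zeta> = of_real b * (- 1 / \<zeta>) - of_real a / (- 1 / \<zeta>)" using True a1 z0 by simp
  ultimately show ?thesis by blast
next
  case bn: False
  then have b: "b > 0" using ab by simp
  show ?thesis
  proof (cases "a = 0")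
    case True
    have "Re \<zeta> > 0" using P True unfolding Pc_def by simp
    then have "Re (\<zeta> / of_real b) > 0" using b by simp
    moreover have "\<zeta> = of_real b * (\<zeta> / of_real b) - of_real a / (\<zeta> / of_real b)" using True b by simp
    ultimately show ?thesis by blast
  next
    case an: False
    then have a: "a > 0" using ab by simp
    define d where "d = csqrt (\<zeta>^2 + 4 * of_real a * of_real b)"
    define w1 where "w1 = (\<zeta> + d) / (2 * of_real b)"
    have dd: "d^2 = \<zeta>^2 + 4 * of_real a * of_real b" unfolding d_def by simp
    have q: "of_real b * w1^2 - \<zeta> * w1 - of_real a = 0"
      unfolding w1_def using b dd by (simp add: field_simps power2_eq_square)
    have w1nz: "w1 \<noteq> 0"
    proof
      assume "w1 = 0" with q have "(of_real a :: complex) = 0" by simp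
      with a show False by simp
    qed
    have eq1: "\<zeta> = of_real b * w1 - of_real a / w1"
      using q w1nz by (simp add: field_simps power2_eq_square)
    consider "Re w1 > 0" | "Re w1 < 0" | "Re w1 = 0" by linarith
    then show ?thesis
    proof cases
      case 1 then show ?thesis using eq1 by blast
    next
      case 2
      define c where "c = - (a/b)"
      define w2 where "w2 = of_real c / w1"
      have "Re w2 = c * (Re w1 / (Re w1^2 + Im w1^2))"
        unfolding w2_def by (simp add: Re_divide power2_eq_square)
      also have "\<dots> > 0"
      proof -
        have "Re w1 / (Re w1^2 + Im w1^2) < 0" using 2 by (intro divide_neg_pos) (auto simp: add_pos_nonneg)
        moreover have "c < 0" using a b unfolding c_def by simp
        ultimately show ?thesis by (metis mult_neg_neg)
      qed
      finally have "Re w2 > 0" .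
      moreover have "\<zeta> = of_real b * w2 - of_real a / w2"
        unfolding eq1 w2_def c_def using a b w1nz by (simp add: field_simps)
      ultimately show ?thesis by blast
    next
      case 3
      define v where "v = Im w1"
      have w1v: "w1 = \<i> * of_real v" using 3 unfolding v_def by (simp add: complex_eq_iff)
      then have v0: "v \<noteq> 0" using w1nz by auto
      have ze: "\<zeta> = \<i> * of_real (b * v + a / v)"
        unfolding eq1 w1v using v0 by (simp add: field_simps)
      have "Re \<zeta> = 0" using ze by simp
      then have "Im \<zeta>^2 < 4*a*b" using P unfolding Pc_def by simp
      moreover have "Im \<zeta> = b * v + a / v" using ze by simp
      moreover have "(b * v + a / v)^2 - 4*a*b = (b * v - a / v)^2"
        using v0 by (simp add: power2_eq_square field_simps)
      ultimately show ?thesis by (smt (verit) zero_le_power2)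
    qed
  qed
qed




lemma K3:
  assumes "norm z < 1"
  shows "2 * F_alpha \<alpha> z - of_real \<alpha> = of_real ((1-\<alpha>)/2) * ((1+z)/(1-z)) - of_real ((1+\<alpha>)/2) / ((1+z)/(1-z))"
proof -
  have nz: "1 - z \<noteq> 0" "1 + z \<noteq> 0" using pm_ne[OF assms] by auto
  have fac: "1 - z^2 = (1-z)*(1+z)" by (simp add: algebra_simps power2_eq_square)
  define D where "D = (1-z)*(1+z)"
  have Dn: "D \<noteq> 0" using nz unfolding D_def by simp
  have l: "2 * F_alpha \<alpha> z - of_real \<alpha> = (2 * (z * (1 - of_real \<alpha> * z)) - of_real \<alpha> * D) / D"
    unfolding F_alpha_def fac D_def[symmetric] using Dn by (simp add: field_simps)
  define a where "a = (1+\<alpha>)/2"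
  define b where "b = (1-\<alpha>)/2"
  have r: "of_real b * ((1+z)/(1-z)) - of_real a / ((1+z)/(1-z))
     = (of_real b * (1+z)^2 - of_real a * (1-z)^2) / D"
    unfolding D_def using nz by (simp add: field_simps power2_eq_square)
  have n: "2 * (z * (1 - of_real \<alpha> * z)) - of_real \<alpha> * D = of_real b * (1+z)^2 - of_real a * (1-z)^2"
    unfolding D_def a_def b_def by (simp add: field_simps power2_eq_square)
  have "2 * F_alpha \<alpha> z - of_real \<alpha> = of_real b * ((1+z)/(1-z)) - of_real a / ((1+z)/(1-z))"
    unfolding l r n ..
  then show ?thesis unfolding a_def b_def .
qed

lemma img_iff:
  assumes al: "-1 \<le> \<alpha>" "\<alpha> \<le> 1"
  shows "p \<in> F_alpha \<alpha> ` unit_disc \<longleftrightarrow> Pc ((1+\<alpha>)/2) ((1-\<alpha>)/2) (2 * p - of_real \<alpha>)"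
proof -
  have s: "(1+\<alpha>)/2 + (1-\<alpha>)/2 = 1" by (simp add: add_divide_distrib[symmetric])
  show ?thesis
  proof
  assume "p \<in> F_alpha \<alpha> ` unit_disc"
  then obtain z where z: "norm z < 1" and p: "p = F_alpha \<alpha> z" by (auto simp: disc_iff)
  show "Pc ((1+\<alpha>)/2) ((1-\<alpha>)/2) (2 * p - of_real \<alpha>)"
    unfolding p K3[OF z] using al Re_quot_pos2[OF z] s by (intro T_P) auto
next
  assume PP: "Pc ((1+\<alpha>)/2) ((1-\<alpha>)/2) (2 * p - of_real \<alpha>)"
  obtain w where w: "Re w > 0" and e: "2 * p - of_real \<alpha> = of_real ((1-\<alpha>)/2) * w - of_real ((1+\<alpha>)/2) / w"
  proof -
    have a0: "(1+\<alpha>)/2 \<ge> 0" and b0: "(1-\<alpha>)/2 \<ge> 0" using al by auto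
    show ?thesis using P_T[OF a0 b0 s PP] that by blast
  qed
  define z where "z = (w - 1) / (w + 1)"
  have wp: "w + 1 \<noteq> 0" using w by (auto simp: complex_eq_iff)
  have e1: "norm (w - 1) ^ 2 = (Re w - 1)^2 + Im w^2" by (simp add: cmod_power2)
  have e2: "norm (w + 1) ^ 2 = (Re w + 1)^2 + Im w^2" by (simp add: cmod_power2)
  have "(Re w - 1)^2 + Im w^2 < (Re w + 1)^2 + Im w^2" using w by (simp add: power2_eq_square algebra_simps)
  then have "norm (w - 1) ^ 2 < norm (w + 1) ^ 2" unfolding e1 e2 .
  then have "norm (w - 1) < norm (w + 1)" by (simp add: power_less_imp_less_base)
  then have z: "norm z < 1" unfolding z_def using wp by (simp add: norm_divide divide_less_eq)
  have c1: "1 + z = 2*w/(w+1)" unfolding z_def using wp by (simp add: field_simps)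
  have c2: "1 - z = 2/(w+1)" unfolding z_def using wp by (simp add: field_simps)
  have cw: "(1+z)/(1-z) = w" unfolding c1 c2 using wp by simp
  have "2 * F_alpha \<alpha> z - of_real \<alpha> = 2 * p - of_real \<alpha>" unfolding K3[OF z] cw e ..
  then have "F_alpha \<alpha> z = p" by simp
  then show "p \<in> F_alpha \<alpha> ` unit_disc" using z by (auto simp: disc_iff)
qed
qed

lemma Pc_seg:
  assumes "Pc a b \<zeta>1" "Pc a b \<zeta>2" "Re \<zeta>1 = Re \<zeta>2" "0 \<le> u" "u \<le> 1"
  shows "Pc a b ((1-u) *\<^sub>R \<zeta>1 + u *\<^sub>R \<zeta>2)"
proof -
  have re: "Re ((1-u) *\<^sub>R \<zeta>1 + u *\<^sub>R \<zeta>2) = Re \<zeta>1" using assms(3) by (simp add: algebra_simps)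
  have im: "Im ((1-u) *\<^sub>R \<zeta>1 + u *\<^sub>R \<zeta>2) = (1-u) * Im \<zeta>1 + u * Im \<zeta>2" by simp
  have cv: "((1-u) * Im \<zeta>1 + u * Im \<zeta>2)^2 \<le> (1-u) * Im \<zeta>1^2 + u * Im \<zeta>2^2"
  proof -
    have "(1-u) * Im \<zeta>1^2 + u * Im \<zeta>2^2 - ((1-u) * Im \<zeta>1 + u * Im \<zeta>2)^2 = u*(1-u)*(Im \<zeta>1 - Im \<zeta>2)^2"
      by (simp add: power2_eq_square algebra_simps)
    moreover have "u*(1-u)*(Im \<zeta>1 - Im \<zeta>2)^2 \<ge> 0" using assms(4,5) by simp
    ultimately show ?thesis by linarith
  qed
  show ?thesis unfolding Pc_def re im
  proof (intro conjI impI)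
    assume "a = 0" then show "Re \<zeta>1 > 0" using assms(1) unfolding Pc_def by simp
  next
    assume "b = 0" then show "Re \<zeta>1 < 0" using assms(1) unfolding Pc_def by simp
  next
    assume r0: "Re \<zeta>1 = 0"
    then have h1: "Im \<zeta>1^2 < 4*a*b" and h2: "Im \<zeta>2^2 < 4*a*b" using assms(1,2,3) unfolding Pc_def by auto
    have "(1-u) * Im \<zeta>1^2 \<le> (1-u) * (4*a*b)" using h1 assms(5) by (intro mult_left_mono) auto
    moreover have "u * Im \<zeta>2^2 \<le> u * (4*a*b)" using h2 assms(4) by (intro mult_left_mono) auto
    moreover have "(1-u) * Im \<zeta>1^2 + u * Im \<zeta>2^2 < 4*a*b"
    proof (cases "u = 0")
      case True then show ?thesis using h1 by simp
    next
      case False then have "u > 0" using assms(4) by simp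
      then have "u * Im \<zeta>2^2 < u * (4*a*b)" using h2 by simp
      then show ?thesis using \<open>(1-u) * Im \<zeta>1^2 \<le> (1-u) * (4*a*b)\<close> by (simp add: algebra_simps)
    qed
    then show "((1-u) * Im \<zeta>1 + u * Im \<zeta>2)^2 < 4*a*b" using cv by linarith
  qed
qed

lemma F_convex_line:
  assumes "-1 \<le> \<alpha>" "\<alpha> \<le> 1"
  shows "convex (F_alpha \<alpha> ` unit_disc \<inter> {w. Re w = x})"
  unfolding convex_alt
proof (intro ballI allI impI)
  fix p q :: complex and u :: real
  assume p: "p \<in> F_alpha \<alpha> ` unit_disc \<inter> {w. Re w = x}" and q: "q \<in> F_alpha \<alpha> ` unit_disc \<inter> {w. Re w = x}"
    and u: "0 \<le> u \<and> u \<le> 1"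
  have Pp: "Pc ((1+\<alpha>)/2) ((1-\<alpha>)/2) (2 * p - of_real \<alpha>)" using p img_iff[OF assms] by auto
  have Pq: "Pc ((1+\<alpha>)/2) ((1-\<alpha>)/2) (2 * q - of_real \<alpha>)" using q img_iff[OF assms] by auto
  have re: "Re (2 * p - of_real \<alpha>) = Re (2 * q - of_real \<alpha>)" using p q by simp
  have "Pc ((1+\<alpha>)/2) ((1-\<alpha>)/2) ((1-u) *\<^sub>R (2 * p - of_real \<alpha>) + u *\<^sub>R (2 * q - of_real \<alpha>))"
    using Pc_seg[OF Pp Pq re] u by auto
  moreover have "(1-u) *\<^sub>R (2 * p - of_real \<alpha>) + u *\<^sub>R (2 * q - of_real \<alpha>) = 2 * ((1 - u) *\<^sub>R p + u *\<^sub>R q) - of_real \<alpha>"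
    by (simp add: scaleR_conv_of_real algebra_simps)
  ultimately have "(1 - u) *\<^sub>R p + u *\<^sub>R q \<in> F_alpha \<alpha> ` unit_disc" using img_iff[OF assms] by simp
  moreover have "Re ((1 - u) *\<^sub>R p + u *\<^sub>R q) = x" using p q by (simp add: algebra_simps)
  ultimately show "(1 - u) *\<^sub>R p + u *\<^sub>R q \<in> F_alpha \<alpha> ` unit_disc \<inter> {w. Re w = x}" by simp
qed

lemma partC:
  assumes "-1 \<le> \<alpha>" "\<alpha> \<le> 1"
  shows "convex_imag_dir (F_alpha \<alpha> ` unit_disc)"
  unfolding convex_imag_dir_def using F_convex_line[OF assms] convex_connected by blast




lemma open_E: "open unit_disc" by (simp add: unit_disc_def)

lemma F_holo: "F_alpha \<alpha> holomorphic_on unit_disc"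
  unfolding holomorphic_on_open[OF open_E] disc_iff
proof (intro ballI)
  fix x assume "x \<in> unit_disc"
  then have "norm x < 1" by (simp add: disc_iff)
  then show "\<exists>f'. (F_alpha \<alpha> has_field_derivative f') (at x)" using F_deriv by blast
qed

lemma partD:
  fixes h g :: "complex \<Rightarrow> complex"
  assumes al: "-1 \<le> \<alpha>" "\<alpha> \<le> 1"
    and hh: "h holomorphic_on unit_disc" and gh: "g holomorphic_on unit_disc"
    and lu: "loc_univ_sense_pres h g"
    and hg: "\<forall>z\<in>unit_disc. h z + g z = F_alpha \<alpha> z"
  shows "inj_on (\<lambda>z. h z + cnj (g z)) unit_disc \<and> convex_imag_dir ((\<lambda>z. h z + cnj (g z)) ` unit_disc)"
proof -
  define F where "F = F_alpha \<alpha>"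
  define E where "E = unit_disc"
  define G where "G = (\<lambda>z. h z - g z)"
  define f where "f = (\<lambda>z. h z + cnj (g z))"
  have oE: "open E" unfolding E_def by (rule open_E)
  have FH: "F holomorphic_on E" unfolding F_def E_def by (rule F_holo)
  have injF: "inj_on F E" unfolding F_def E_def using partB[OF al] .
  obtain gi where gi_hol: "gi holomorphic_on (F ` E)"
    and gi_d: "\<And>z. z \<in> E \<Longrightarrow> deriv F z * deriv gi (F z) = 1"
    and gi_inv: "\<And>z. z \<in> E \<Longrightarrow> gi (F z) = z"
    using holomorphic_has_inverse[OF FH oE injF] by metis
  have oFE: "open (F ` E)" using open_mapping_thm3[OF FH oE injF] .
  have GH: "G holomorphic_on E" unfolding G_def E_def using hh gh by (intro holomorphic_intros)
  have dF: "deriv F z = deriv h z + deriv g z" if z: "z \<in> E" for z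
  proof -
    have ev: "eventually (\<lambda>w. F w = h w + g w) (nhds z)"
      using eventually_nhds_in_open[OF oE z] hg unfolding F_def E_def
      by (auto elim!: eventually_mono)
    have "deriv F z = deriv (\<lambda>w. h w + g w) z" by (rule deriv_cong_ev[OF ev refl])
    also have "\<dots> = deriv h z + deriv g z"
      using hh gh z oE unfolding E_def
      by (intro deriv_add) (auto intro: holomorphic_on_imp_differentiable_at)
    finally show ?thesis .
  qed
  have dG: "deriv G z = deriv h z - deriv g z" if z: "z \<in> E" for z
    unfolding G_def using hh gh z oE unfolding E_def
    by (intro deriv_diff) (auto intro: holomorphic_on_imp_differentiable_at)
  have pos: "Re (deriv G z / deriv F z) > 0" if z: "z \<in> E" for z
  proof -
    have h0: "deriv h z \<noteq> 0" and om: "norm (deriv g z / deriv h z) < 1"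
      using lu z unfolding loc_univ_sense_pres_def E_def by auto
    define \<omega> where "\<omega> = deriv g z / deriv h z"
    have e1: "deriv h z - deriv g z = deriv h z * (1 - \<omega>)" unfolding \<omega>_def using h0 by (simp add: algebra_simps)
    have e2: "deriv h z + deriv g z = deriv h z * (1 + \<omega>)" unfolding \<omega>_def using h0 by (simp add: algebra_simps)
    have "deriv G z / deriv F z = (1 - \<omega>) / (1 + \<omega>)"
      unfolding dG[OF z] dF[OF z] e1 e2 using h0 by simp
    then show ?thesis using Re_quot_pos om unfolding \<omega>_def by simp
  qed
  have main: "\<exists>\<phi>. (\<forall>t. Complex x t \<in> F ` E \<longrightarrow> \<phi> t = Im (G (gi (Complex x t))))
       \<and> (\<forall>t. Complex x t \<in> F ` E \<longrightarrow> (\<exists>y. (\<phi> has_real_derivative y) (at t) \<and> y > 0))" for x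
  proof -
    define \<phi> where "\<phi> = (\<lambda>t. Im (G (gi (Complex x t))))"
    have "(\<phi> has_real_derivative Re (deriv G (gi (Complex x t)) / deriv F (gi (Complex x t)))) (at t)"
      if t: "Complex x t \<in> F ` E" for t
    proof -
      define p where "p = Complex x t"
      define z where "z = gi p"
      have pF: "p \<in> F ` E" using t unfolding p_def .
      have zE: "z \<in> E" and Fz: "F z = p" using pF gi_inv unfolding z_def by auto
      have d1: "(gi has_field_derivative deriv gi p) (at p)"
        using gi_hol oFE pF by (auto intro: holomorphic_derivI)
      have d2: "(G has_field_derivative deriv G z) (at z)"
        using GH oE zE by (auto intro: holomorphic_derivI)
      have d0: "((\<lambda>\<zeta>. of_real x + \<i> * \<zeta>) has_field_derivative \<i>) (at (of_real t))"
        by (auto intro!: derivative_eq_intros)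
      have pe: "of_real x + \<i> * of_real t = p" unfolding p_def by (simp add: complex_eq_iff)
      have d3: "((\<lambda>\<zeta>. G (gi (of_real x + \<i> * \<zeta>))) has_field_derivative (deriv G z * (deriv gi p * \<i>))) (at (of_real t))"
      proof -
        have d1': "(gi has_field_derivative deriv gi p) (at (of_real x + \<i> * of_real t))" using d1 pe by simp
        have c1: "((\<lambda>\<zeta>. gi (of_real x + \<i> * \<zeta>)) has_field_derivative deriv gi p * \<i>) (at (of_real t))"
          by (rule DERIV_chain2[OF d1' d0])
        have d2': "(G has_field_derivative deriv G z) (at (gi (of_real x + \<i> * of_real t)))" using d2 pe z_def by simp
        show ?thesis by (rule DERIV_chain2[OF d2' c1])
      qed
      have d4: "((\<lambda>s. Im (G (gi (of_real x + \<i> * of_real s)))) has_real_derivative Im (deriv G z * (deriv gi p * \<i>))) (at t)"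
        using has_field_derivative_Im[OF has_vector_derivative_real_field[OF d3]] by simp
      have cx: "\<And>s. of_real x + \<i> * of_real s = Complex x s" by (simp add: complex_eq_iff)
      have ce: "(\<lambda>s. Im (G (gi (of_real x + \<i> * of_real s)))) = \<phi>"
        unfolding \<phi>_def cx ..
      have pr: "deriv F z * deriv gi p = 1" using gi_d[OF zE] Fz by simp
      then have ne: "deriv F z \<noteq> 0" by auto
      have gd: "deriv gi p = 1 / deriv F z" using pr ne by (simp add: field_simps)
      have "deriv G z * (deriv gi p * \<i>) = \<i> * (deriv G z / deriv F z)"
        unfolding gd by simp
      then have "Im (deriv G z * (deriv gi p * \<i>)) = Re (deriv G z / deriv F z)"
        by (simp only: Im_i_times)
      then show ?thesis using d4 unfolding ce z_def p_def by simp
    qed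
    then show ?thesis using pos gi_inv unfolding \<phi>_def by (metis (no_types, lifting) image_iff)
  qed
  have ReF: "Re (f z) = Re (F z)" if "z \<in> E" for z
  proof -
    have e: "F z = h z + g z" using hg that unfolding F_def E_def by simp
    show ?thesis unfolding f_def e by simp
  qed
  have ImF: "Im (f z) = Im (G z)" if "z \<in> E" for z
    unfolding f_def G_def by simp
  have Jconv: "Complex x s \<in> F ` E"
    if t1: "Complex x t1 \<in> F ` E" and t2: "Complex x t2 \<in> F ` E" and s: "t1 \<le> s" "s \<le> t2" for x t1 t2 s
  proof (cases "t1 = t2")
    case True then have "s = t1" using s by simp
    then show ?thesis using t1 by simp
  next
    case False then have lt: "t1 < t2" using s by simp
    define u where "u = (s - t1) / (t2 - t1)"
    have u0: "0 \<le> u" and u1: "u \<le> 1" unfolding u_def using s lt by (auto simp: divide_simps)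
    have cv: "convex (F ` E \<inter> {w. Re w = x})" unfolding F_def E_def by (rule F_convex_line[OF al])
    have "(1 - u) *\<^sub>R Complex x t1 + u *\<^sub>R Complex x t2 \<in> F ` E \<inter> {w. Re w = x}"
      using t1 t2 u0 u1 by (intro convexD[OF cv]) auto
    moreover have "(1 - u) *\<^sub>R Complex x t1 + u *\<^sub>R Complex x t2 = Complex x s"
    proof -
      have ne: "t2 - t1 \<noteq> 0" using lt by simp
      have a1: "u * (t2 - t1) = s - t1" unfolding u_def using ne by simp
      have a2: "(1 - u) * t1 + u * t2 = t1 + u * (t2 - t1)" by (simp add: algebra_simps)
      have "(1 - u) * t1 + u * t2 = s" using a1 a2 by simp
      then show ?thesis by (simp add: complex_eq_iff algebra_simps)
    qed
    ultimately show ?thesis by simp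
  qed
  have linefacts: "\<exists>\<phi>. (\<forall>t. Complex x t \<in> F ` E \<longrightarrow> \<phi> t = Im (G (gi (Complex x t))))
       \<and> (\<forall>t1 t2. Complex x t1 \<in> F ` E \<longrightarrow> Complex x t2 \<in> F ` E \<longrightarrow> t1 < t2 \<longrightarrow> \<phi> t1 < \<phi> t2)
       \<and> continuous_on {t. Complex x t \<in> F ` E} \<phi>
       \<and> connected {t. Complex x t \<in> F ` E}" for x
  proof -
    obtain \<phi> where \<phi>1: "\<And>t. Complex x t \<in> F ` E \<Longrightarrow> \<phi> t = Im (G (gi (Complex x t)))"
      and \<phi>2: "\<And>t. Complex x t \<in> F ` E \<Longrightarrow> \<exists>y. (\<phi> has_real_derivative y) (at t) \<and> y > 0"
      using main[of x] by blast
    have mono: "\<phi> t1 < \<phi> t2" if m1: "Complex x t1 \<in> F ` E" and m2: "Complex x t2 \<in> F ` E" and lt: "t1 < t2" for t1 t2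
    proof (rule DERIV_pos_imp_increasing[OF lt])
      fix s assume "t1 \<le> s" "s \<le> t2"
      then have "Complex x s \<in> F ` E" by (rule Jconv[OF m1 m2])
      then show "\<exists>y. (\<phi> has_real_derivative y) (at s) \<and> y > 0" by (rule \<phi>2)
    qed
    have cont: "continuous_on {t. Complex x t \<in> F ` E} \<phi>"
    proof (rule continuous_at_imp_continuous_on, rule ballI)
      fix t assume "t \<in> {t. Complex x t \<in> F ` E}"
      then obtain y where "(\<phi> has_real_derivative y) (at t)" using \<phi>2 by blast
      then show "isCont \<phi> t" by (rule DERIV_isCont)
    qed
    have "is_interval {t. Complex x t \<in> F ` E}"
      unfolding is_interval_1 using Jconv by (simp only: mem_Collect_eq) blast
    then have "connected {t. Complex x t \<in> F ` E}" by (simp add: is_interval_connected_1)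
    then show ?thesis using \<phi>1 mono cont by blast
  qed
  have injf: "inj_on f E"
  proof (rule inj_onI)
    fix z1 z2 assume z1: "z1 \<in> E" and z2: "z2 \<in> E" and eq: "f z1 = f z2"
    define x where "x = Re (F z1)"
    have x2: "Re (F z2) = x" unfolding x_def using ReF[OF z1] ReF[OF z2] eq by simp
    obtain \<phi> where \<phi>1: "\<And>t. Complex x t \<in> F ` E \<Longrightarrow> \<phi> t = Im (G (gi (Complex x t)))"
      and mono: "\<And>t1 t2. Complex x t1 \<in> F ` E \<Longrightarrow> Complex x t2 \<in> F ` E \<Longrightarrow> t1 < t2 \<Longrightarrow> \<phi> t1 < \<phi> t2"
      using linefacts[of x] by blast
    have c1: "Complex x (Im (F z1)) = F z1" unfolding x_def by (simp add: complex_eq_iff)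
    have c2: "Complex x (Im (F z2)) = F z2" using x2 by (simp add: complex_eq_iff)
    have m1: "Complex x (Im (F z1)) \<in> F ` E" using c1 z1 by simp
    have m2: "Complex x (Im (F z2)) \<in> F ` E" using c2 z2 by simp
    have p1: "\<phi> (Im (F z1)) = Im (f z1)" using \<phi>1[OF m1] c1 gi_inv[OF z1] ImF[OF z1] by simp
    have p2: "\<phi> (Im (F z2)) = Im (f z2)" using \<phi>1[OF m2] c2 gi_inv[OF z2] ImF[OF z2] by simp
    have "Im (F z1) = Im (F z2)"
    proof (rule ccontr)
      assume "Im (F z1) \<noteq> Im (F z2)"
      then consider "Im (F z1) < Im (F z2)" | "Im (F z2) < Im (F z1)" by linarith
      then show False
      proof cases
        case 1 then show False using mono[OF m1 m2] p1 p2 eq by simp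
      next
        case 2 then show False using mono[OF m2 m1] p1 p2 eq by simp
      qed
    qed
    then have "F z1 = F z2" using x2 unfolding x_def by (simp add: complex_eq_iff)
    then show "z1 = z2" using injF z1 z2 by (simp add: inj_on_eq_iff)
  qed
  have cvf: "connected (f ` E \<inter> {w. Re w = x})" for x
  proof -
    obtain \<phi> where \<phi>1: "\<And>t. Complex x t \<in> F ` E \<Longrightarrow> \<phi> t = Im (G (gi (Complex x t)))"
      and cont: "continuous_on {t. Complex x t \<in> F ` E} \<phi>"
      and conn: "connected {t. Complex x t \<in> F ` E}"
      using linefacts[of x] by blast
    have eqs: "f ` E \<inter> {w. Re w = x} = (\<lambda>t. Complex x (\<phi> t)) ` {t. Complex x t \<in> F ` E}"
    proof (intro equalityI subsetI)
      fix w assume "w \<in> f ` E \<inter> {w. Re w = x}"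
      then obtain z where z: "z \<in> E" and wf: "w = f z" and rx: "Re w = x" by auto
      have c: "Complex x (Im (F z)) = F z" using ReF[OF z] wf rx by (simp add: complex_eq_iff)
      have m: "Complex x (Im (F z)) \<in> F ` E" using c z by simp
      have "\<phi> (Im (F z)) = Im w" using \<phi>1[OF m] c gi_inv[OF z] ImF[OF z] wf by simp
      then have "w = Complex x (\<phi> (Im (F z)))" using rx by (simp add: complex_eq_iff)
      then show "w \<in> (\<lambda>t. Complex x (\<phi> t)) ` {t. Complex x t \<in> F ` E}" using m by blast
    next
      fix w assume "w \<in> (\<lambda>t. Complex x (\<phi> t)) ` {t. Complex x t \<in> F ` E}"
      then obtain t where m: "Complex x t \<in> F ` E" and wt: "w = Complex x (\<phi> t)" by auto
      then obtain z where z: "z \<in> E" and Fz: "F z = Complex x t" by (metis imageE)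
      have "\<phi> t = Im (f z)" using \<phi>1[OF m] Fz[symmetric] gi_inv[OF z] ImF[OF z] by simp
      moreover have "Re (f z) = x" using ReF[OF z] Fz by simp
      ultimately have "w = f z" using wt by (simp add: complex_eq_iff)
      moreover have "Re w = x" using wt by simp
      ultimately show "w \<in> f ` E \<inter> {w. Re w = x}" using z by blast
    qed
    have ce: "(\<lambda>t. Complex x (\<phi> t)) = (\<lambda>t. of_real x + \<i> * of_real (\<phi> t))"
      by (rule ext) (simp add: complex_eq_iff)
    have "continuous_on {t. Complex x t \<in> F ` E} (\<lambda>t. Complex x (\<phi> t))"
      unfolding ce by (intro continuous_intros cont)
    then show ?thesis unfolding eqs using conn connected_continuous_image by blast
  qed
  show ?thesis using injf cvf unfolding convex_imag_dir_def f_def E_def by simp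
qed


theorem mainTheorem1:
  fixes \<alpha> :: real
  assumes "-1 \<le> \<alpha>" and "\<alpha> \<le> 1"
  shows "(\<forall>z\<in>unit_disc. Re ((1 - z^2) * deriv (F_alpha \<alpha>) z) > 0)
       \<and> inj_on (F_alpha \<alpha>) unit_disc
       \<and> convex_imag_dir (F_alpha \<alpha> ` unit_disc)
       \<and> (\<forall>h g. h holomorphic_on unit_disc \<longrightarrow> g holomorphic_on unit_disc \<longrightarrow>
              loc_univ_sense_pres h g \<longrightarrow>
              h 0 = 0 \<longrightarrow> g 0 = 0 \<longrightarrow> deriv h 0 = 1 \<longrightarrow> deriv g 0 = 0 \<longrightarrow>
              (\<forall>z\<in>unit_disc. h z + g z = F_alpha \<alpha> z) \<longrightarrow>
              (\<lambda>z. h z + cnj (g z)) \<in> S_H \<and>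
              convex_imag_dir ((\<lambda>z. h z + cnj (g z)) ` unit_disc))"
proof (intro conjI allI impI ballI)
  fix z assume "z \<in> unit_disc"
  then show "Re ((1 - z^2) * deriv (F_alpha \<alpha>) z) > 0" using partA[OF assms] by (simp add: disc_iff)
next
  show "inj_on (F_alpha \<alpha>) unit_disc" by (rule partB[OF assms])
next
  show "convex_imag_dir (F_alpha \<alpha> ` unit_disc)" by (rule partC[OF assms])
next
  fix h g :: "complex \<Rightarrow> complex"
  assume hh: "h holomorphic_on unit_disc" and gh: "g holomorphic_on unit_disc"
    and lu: "loc_univ_sense_pres h g" and h0: "h 0 = 0" and g0: "g 0 = 0"
    and dh: "deriv h 0 = 1" and dg: "deriv g 0 = 0"
    and hg: "\<forall>z\<in>unit_disc. h z + g z = F_alpha \<alpha> z"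
  have D: "inj_on (\<lambda>z. h z + cnj (g z)) unit_disc \<and> convex_imag_dir ((\<lambda>z. h z + cnj (g z)) ` unit_disc)"
    by (rule partD[OF assms hh gh lu hg])
  show "(\<lambda>z. h z + cnj (g z)) \<in> S_H"
    unfolding S_H_def using hh gh lu h0 g0 dh D by auto
  show "convex_imag_dir ((\<lambda>z. h z + cnj (g z)) ` unit_disc)" using D by simp
qed

end
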